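(* Let $\mathcal{C}$ be an $(n,k,3)$ binary linear code. Then the extended code $\mathcal{C}'$ is an $(n+1,k,4)$ code with $$\rho(\mathcal{C}') \le 2\rho(\mathcal{C}) = 2r(\mathcal{C}') - 2.$$
   Context: An $(n,k,d)$ code is a linear code of length $n$, dimension $k$ and minimum Hamming distance $d$. The extended code $\mathcal{C}'$ of a binary code $\mathcal{C}$ of length $n$ is obtained by appending to each codeword an overall parity-check bit (the sum mod 2 of its coordinates). A parity-check matrix for a linear code $\mathcal{C}$ is any matrix (possibly with linearly dependent rows) whose rows span $\mathcal{C}^\perp$. The redundancy $r(\mathcal{C})$ is the minimum number of rows of a parity-check matrix for $\mathcal{C}$. For a parity-check matrix $H$, the stopping distance $s(H)$ is the largest integer such that for every set of $s(H)-1$ or fewer columns of $H$, the projection of $H$ onto those columns contains at least one row of Hamming weight exactly one. The stopping redundancy $\rho(\mathcal{C})$ is the smallest number of rows of a parity-check matrix $H$ for $\mathcal{C}$ with $s(H) = d(\mathcal{C})$, the minimum distance of $\mathcal{C}$. *)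

theory Defs
  imports Main
begin

text \<open>Binary words of length n are represented by their supports, i.e. subsets of
  {..<n}. Addition over GF(2) is symmetric difference; the GF(2) inner product of
  x and y is the parity of card (x \<inter> y).\<close>

definition binary_linear_code :: "nat \<Rightarrow> nat set set \<Rightarrow> bool" where
  "binary_linear_code n C \<longleftrightarrow>
     C \<subseteq> Pow {..<n} \<and> {} \<in> C \<and> (\<forall>x\<in>C. \<forall>y\<in>C. (x - y) \<union> (y - x) \<in> C)"

text \<open>The code has dimension k (as a GF(2)-space) iff it has 2^k codewords.\<close>
definition code_dim :: "nat set set \<Rightarrow> nat \<Rightarrow> bool" where
  "code_dim C k \<longleftrightarrow> card C = 2 ^ k"

text \<open>d is the minimum Hamming distance (= minimum nonzero weight for linear codes).\<close>
definition has_min_dist :: "nat set set \<Rightarrow> nat \<Rightarrow> bool" where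
  "has_min_dist C d \<longleftrightarrow>
     (\<exists>x\<in>C. x \<noteq> {} \<and> card x = d) \<and> (\<forall>x\<in>C. x \<noteq> {} \<longrightarrow> d \<le> card x)"

definition min_dist :: "nat set set \<Rightarrow> nat" where
  "min_dist C = (LEAST w. \<exists>x\<in>C. x \<noteq> {} \<and> card x = w)"

text \<open>Extended code: append overall parity-check bit at coordinate n.\<close>
definition extended_code :: "nat \<Rightarrow> nat set set \<Rightarrow> nat set set" where
  "extended_code n C = (\<lambda>x. if odd (card x) then insert n x else x) ` C"

definition dual_code :: "nat \<Rightarrow> nat set set \<Rightarrow> nat set set" where
  "dual_code n C = {y. y \<subseteq> {..<n} \<and> (\<forall>x\<in>C. even (card (x \<inter> y)))}"

text \<open>GF(2)-span of a list of rows: all sums of subsets of the rows.\<close>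
definition gf2_span :: "nat set list \<Rightarrow> nat set set" where
  "gf2_span H = {{i. odd (card {h\<in>T. i \<in> h})} | T. T \<subseteq> set H}"

text \<open>H (a list of rows, possibly dependent or repeated) is a parity-check matrix.\<close>
definition is_pcm :: "nat \<Rightarrow> nat set set \<Rightarrow> nat set list \<Rightarrow> bool" where
  "is_pcm n C H \<longleftrightarrow> (\<forall>h\<in>set H. h \<subseteq> {..<n}) \<and> gf2_span H = dual_code n C"

definition redundancy :: "nat \<Rightarrow> nat set set \<Rightarrow> nat" where
  "redundancy n C = (LEAST m. \<exists>H. is_pcm n C H \<and> length H = m)"

definition stopping_set :: "nat set list \<Rightarrow> nat set \<Rightarrow> bool" where
  "stopping_set H S \<longleftrightarrow> (\<forall>h\<in>set H. card (h \<inter> S) \<noteq> 1)"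

text \<open>Stopping distance: size of smallest nonempty stopping set among columns {..<n}
  (equivalently the largest s such that every nonempty set of at most s-1 columns
  has a row of weight one on it).\<close>
definition stopping_distance :: "nat \<Rightarrow> nat set list \<Rightarrow> nat" where
  "stopping_distance n H =
     (LEAST s. \<exists>S. S \<subseteq> {..<n} \<and> S \<noteq> {} \<and> stopping_set H S \<and> card S = s)"

definition stopping_redundancy :: "nat \<Rightarrow> nat set set \<Rightarrow> nat" where
  "stopping_redundancy n C =
     (LEAST m. \<exists>H. is_pcm n C H \<and> stopping_distance n H = min_dist C \<and> length H = m)"

end

theory Submission imports Defs begin

abbreviation sd :: "'a set \<Rightarrow> 'a set \<Rightarrow> 'a set" where
  "sd x y \<equiv> (x - y) \<union> (y - x)"

lemma card_sd:
  assumes "finite A" "finite B"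
  shows "card (sd A B) + 2 * card (A \<inter> B) = card A + card B"
proof -
  have e: "sd A B = (A \<union> B) - (A \<inter> B)" by auto
  have "card (sd A B) = card (A \<union> B) - card (A \<inter> B)"
    unfolding e using assms by (subst card_Diff_subset) auto
  moreover have "card (A \<inter> B) \<le> card (A \<union> B)" using assms by (intro card_mono) auto
  moreover have "card (A \<union> B) + card (A \<inter> B) = card A + card B"
    using card_Un_Int[OF assms] by simp
  ultimately show ?thesis by linarith
qed

lemma even_card_sd:
  assumes "finite A" "finite B"
  shows "even (card (sd A B)) \<longleftrightarrow> (even (card A) \<longleftrightarrow> even (card B))"
proof -
  have "card (sd A B) + 2 * card (A \<inter> B) = card A + card B" using card_sd[OF assms] .
  then show ?thesis by (metis even_add even_mult_iff even_numeral)
qed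

lemma even_sd_Int:
  assumes "finite y"
  shows "even (card (sd A B \<inter> y)) \<longleftrightarrow> (even (card (A \<inter> y)) \<longleftrightarrow> even (card (B \<inter> y)))"
proof -
  have "sd A B \<inter> y = sd (A \<inter> y) (B \<inter> y)" by auto
  then show ?thesis using even_card_sd[of "A \<inter> y" "B \<inter> y"] assms by simp
qed

lemma even_Int_sd:
  assumes "finite y"
  shows "even (card (y \<inter> sd A B)) \<longleftrightarrow> (even (card (y \<inter> A)) \<longleftrightarrow> even (card (y \<inter> B)))"
  using even_sd_Int[OF assms, of A B] by (simp add: Int_commute)

definition sp :: "nat set set \<Rightarrow> nat set" where
  "sp T = {i. odd (card {h\<in>T. i \<in> h})}"

lemma gf2_span_sp: "gf2_span H = {sp T | T. T \<subseteq> set H}"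
  unfolding gf2_span_def sp_def by simp

lemma sp_sd:
  assumes "finite T1" "finite T2"
  shows "sp (sd T1 T2) = sd (sp T1) (sp T2)"
proof -
  have "i \<in> sp (sd T1 T2) \<longleftrightarrow> i \<in> sd (sp T1) (sp T2)" for i
  proof -
    have e: "{h \<in> sd T1 T2. i \<in> h} = sd {h\<in>T1. i \<in> h} {h\<in>T2. i \<in> h}" by auto
    show ?thesis unfolding sp_def using e even_card_sd[of "{h\<in>T1. i \<in> h}" "{h\<in>T2. i \<in> h}"] assms
      by auto
  qed
  then show ?thesis by blast
qed

lemma sp_empty: "sp {} = {}" by (simp add: sp_def)
lemma sp_single: "sp {h} = h"
proof -
  have "{g\<in>{h}. i\<in>g} = (if i\<in>h then {h} else {})" for i by auto
  then show ?thesis unfolding sp_def by auto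
qed

lemma span_closed:
  assumes "x \<in> gf2_span H" "y \<in> gf2_span H"
  shows "sd x y \<in> gf2_span H"
proof -
  obtain T1 where T1: "T1 \<subseteq> set H" "x = sp T1" using assms(1) unfolding gf2_span_sp by blast
  obtain T2 where T2: "T2 \<subseteq> set H" "y = sp T2" using assms(2) unfolding gf2_span_sp by blast
  have f: "finite T1" "finite T2" using T1 T2 finite_subset by auto
  have "sd x y = sp (sd T1 T2)" using sp_sd[OF f] T1 T2 by simp
  moreover have "sd T1 T2 \<subseteq> set H" using T1 T2 by auto
  ultimately show ?thesis unfolding gf2_span_sp by blast
qed

lemma span_gen: "h \<in> set H \<Longrightarrow> h \<in> gf2_span H"
  unfolding gf2_span_sp using sp_single[of h] by (metis (mono_tags, lifting) empty_subsetI insert_subset mem_Collect_eq)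

lemma span_empty: "{} \<in> gf2_span H"
  unfolding gf2_span_sp using sp_empty by blast

lemma span_min:
  assumes "{} \<in> L" "\<forall>x\<in>L. \<forall>y\<in>L. sd x y \<in> L" "set H \<subseteq> L"
  shows "gf2_span H \<subseteq> L"
proof
  fix z assume "z \<in> gf2_span H"
  then obtain T where T: "T \<subseteq> set H" "z = sp T" unfolding gf2_span_sp by blast
  have "finite T" using T finite_subset by auto
  have "sp T \<in> L" using \<open>finite T\<close> T(1)
  proof (induction T rule: finite_induct)
    case empty then show ?case using assms(1) sp_empty by simp
  next
    case (insert h T)
    have "insert h T = sd T {h}" using insert.hyps by auto
    then have "sp (insert h T) = sd (sp T) h" using sp_sd[of T "{h}"] insert.hyps sp_single by simp
    moreover have "sp T \<in> L" using insert by simp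
    moreover have "h \<in> L" using insert.prems assms(3) by auto
    ultimately show ?case using assms(2) by simp
  qed
  then show "z \<in> L" using T by simp
qed

lemma span_Nil: "gf2_span [] = {{}}"
  unfolding gf2_span_sp using sp_empty by auto

lemma span_mono:
  assumes "set H \<subseteq> gf2_span H2"
  shows "gf2_span H \<subseteq> gf2_span H2"
  using span_min[of "gf2_span H2" H] assms span_empty span_closed by blast

lemma blc_sd: "binary_linear_code n C \<Longrightarrow> x \<in> C \<Longrightarrow> y \<in> C \<Longrightarrow> sd x y \<in> C"
  unfolding binary_linear_code_def by blast

lemma blc_fin: "binary_linear_code n C \<Longrightarrow> x \<in> C \<Longrightarrow> finite x \<and> x \<subseteq> {..<n}"
  unfolding binary_linear_code_def by (meson PowD finite_lessThan finite_subset subsetD)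

lemma dual_lin: "binary_linear_code n (dual_code n C)"
  unfolding binary_linear_code_def
proof (intro conjI ballI)
  show "dual_code n C \<subseteq> Pow {..<n}" unfolding dual_code_def by auto
  show "{} \<in> dual_code n C" unfolding dual_code_def by auto
  fix x y assume x: "x \<in> dual_code n C" and y: "y \<in> dual_code n C"
  have fx: "finite x" "finite y" using x y unfolding dual_code_def by (auto intro: finite_subset)
  show "sd x y \<in> dual_code n C"
    unfolding dual_code_def
  proof (intro CollectI conjI ballI)
    show "sd x y \<subseteq> {..<n}" using x y unfolding dual_code_def by auto
    fix z assume "z \<in> C"
    then have "even (card (z \<inter> x))" "even (card (z \<inter> y))" using x y unfolding dual_code_def by auto
    moreover have "z \<inter> sd x y = sd (z \<inter> x) (z \<inter> y)" by auto
    ultimately show "even (card (z \<inter> sd x y))"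
      using even_card_sd[of "z \<inter> x" "z \<inter> y"] fx by (simp add: Int_commute)
  qed
qed

lemma char_zero:
  assumes G: "finite G" "\<forall>a\<in>G. \<forall>b\<in>G. sd a b \<in> G" "\<forall>a\<in>G. finite a"
    and g: "g \<in> G" "odd (card (g \<inter> y))"
  shows "(\<Sum>x\<in>G. (-1::int) ^ card (x \<inter> y)) = 0"
proof -
  let ?f = "\<lambda>x. sd x g"
  let ?c = "\<lambda>x. (-1::int) ^ card (x \<inter> y)"
  have inv: "?f (?f x) = x" for x by auto
  have bij: "bij_betw ?f G G"
    by (rule bij_betw_byWitness[where f' = ?f]) (use G g inv in auto)
  have "sum (?c \<circ> ?f) G = sum ?c G" using sum.reindex_bij_betw[OF bij, of ?c] by (simp add: comp_def)
  moreover have "(?c \<circ> ?f) x = - ?c x" if "x \<in> G" for x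
  proof -
    have fin: "finite (x \<inter> y)" "finite (g \<inter> y)" using that G g by auto
    have "sd x g \<inter> y = sd (x \<inter> y) (g \<inter> y)" by auto
    then have "even (card (sd x g \<inter> y)) \<longleftrightarrow> odd (card (x \<inter> y))"
      using even_card_sd[OF fin] g by simp
    then show ?thesis by (auto simp: minus_one_power_iff)
  qed
  ultimately have "sum (\<lambda>x. - ?c x) G = sum ?c G" by (metis (no_types, lifting) sum.cong)
  then show ?thesis by (simp add: sum_negf)
qed

lemma card_dual:
  assumes C: "binary_linear_code n C"
  shows "card C * card (dual_code n C) = 2 ^ n"
proof -
  let ?P = "Pow {..<n}"
  let ?D = "dual_code n C"
  let ?c = "\<lambda>x y. (-1::int) ^ card (x \<inter> y)"
  have CP: "C \<subseteq> ?P" using C unfolding binary_linear_code_def by blast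
  have finC: "finite C" using CP finite_subset by blast
  have DP: "?D \<subseteq> ?P" unfolding dual_code_def by auto
  have finD: "finite ?D" using DP finite_subset by blast
  have Cfin: "\<forall>a\<in>C. finite a" using C blc_fin by blast
  have Csd: "\<forall>a\<in>C. \<forall>b\<in>C. sd a b \<in> C" using C blc_sd by blast
  have Pfin: "\<forall>a\<in>?P. finite a" by (auto intro: finite_subset)
  have Psd: "\<forall>a\<in>?P. \<forall>b\<in>?P. sd a b \<in> ?P" by auto
  have inner1: "(\<Sum>x\<in>C. ?c x y) = (if y \<in> ?D then int (card C) else 0)" if y: "y \<in> ?P" for y
  proof (cases "y \<in> ?D")
    case True
    then have "\<forall>x\<in>C. ?c x y = 1" unfolding dual_code_def by auto
    then show ?thesis using True by simp
  next
    case False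
    then obtain g where "g \<in> C" "odd (card (g \<inter> y))" using y unfolding dual_code_def by auto
    then show ?thesis using char_zero[OF finC Csd Cfin] False by simp
  qed
  have inner2: "(\<Sum>y\<in>?P. ?c x y) = (if x = {} then 2 ^ n else 0)" if x: "x \<in> C" for x
  proof (cases "x = {}")
    case True
    then show ?thesis by (simp add: card_Pow)
  next
    case False
    then obtain j where j: "j \<in> x" by blast
    have "j < n" using j x CP by auto
    then have g: "{j} \<in> ?P" by auto
    have "(\<Sum>y\<in>?P. ?c y x) = 0"
      by (rule char_zero[OF _ Psd Pfin g]) (use j in auto)
    then show ?thesis using False by (simp add: Int_commute)
  qed
  have "(\<Sum>y\<in>?P. \<Sum>x\<in>C. ?c x y) = (\<Sum>y\<in>?P. if y \<in> ?D then int (card C) else 0)"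
    using inner1 by simp
  also have "\<dots> = (\<Sum>y\<in>?D. int (card C))"
  proof -
    have "?P \<inter> ?D = ?D" using DP by blast
    then show ?thesis by (simp add: sum.If_cases)
  qed
  also have "\<dots> = int (card C * card ?D)" by simp
  finally have e1: "(\<Sum>y\<in>?P. \<Sum>x\<in>C. ?c x y) = int (card C * card ?D)" .
  have "(\<Sum>x\<in>C. \<Sum>y\<in>?P. ?c x y) = (\<Sum>x\<in>C. if x = {} then 2 ^ n else 0)"
    using inner2 by simp
  also have "\<dots> = 2 ^ n" using C finC unfolding binary_linear_code_def
    by (simp add: sum.delta)
  finally have e2: "(\<Sum>x\<in>C. \<Sum>y\<in>?P. ?c x y) = 2 ^ n" .
  have "(\<Sum>y\<in>?P. \<Sum>x\<in>C. ?c x y) = (\<Sum>x\<in>C. \<Sum>y\<in>?P. ?c x y)"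
    by (rule sum.swap)
  then have "int (card C * card ?D) = 2 ^ n" using e1 e2 by simp
  then show ?thesis by (metis of_nat_eq_iff of_nat_numeral of_nat_power)
qed

lemma double_dual:
  assumes C: "binary_linear_code n C"
  shows "dual_code n (dual_code n C) = C"
proof -
  let ?D = "dual_code n C"
  let ?DD = "dual_code n ?D"
  have sub: "C \<subseteq> ?DD"
  proof
    fix x assume x: "x \<in> C"
    then have "x \<subseteq> {..<n}" using C blc_fin by blast
    moreover have "\<forall>y\<in>?D. even (card (y \<inter> x))" using x unfolding dual_code_def by (auto simp: Int_commute)
    ultimately show "x \<in> ?DD" unfolding dual_code_def by blast
  qed
  have "card C * card ?D = 2 ^ n" by (rule card_dual[OF C])
  moreover have "card ?D * card ?DD = 2 ^ n" by (rule card_dual[OF dual_lin])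
  ultimately have eq: "card C * card ?D = card ?DD * card ?D" by (simp add: mult.commute)
  have "card ?D > 0" using \<open>card C * card ?D = 2 ^ n\<close> by (metis gr0I mult_0_right power_not_zero zero_neq_numeral)
  then have "card C = card ?DD" using eq by simp
  moreover have "finite ?DD" unfolding dual_code_def by (rule finite_subset[of _ "Pow {..<n}"]) auto
  ultimately show ?thesis using sub by (metis card_subset_eq)
qed

definition ex1 :: "nat \<Rightarrow> nat set \<Rightarrow> nat set" where
  "ex1 n x = (if odd (card x) then insert n x else x)"

lemma ext_img: "extended_code n C = ex1 n ` C"
  unfolding extended_code_def ex1_def by simp

lemma ex1_Int: "x \<subseteq> {..<n} \<Longrightarrow> y \<subseteq> {..<n} \<Longrightarrow> ex1 n x \<inter> y = x \<inter> y"
  unfolding ex1_def by auto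

lemma ex1_restr: "x \<subseteq> {..<n} \<Longrightarrow> ex1 n x \<inter> {..<n} = x"
  unfolding ex1_def by auto

lemma ex1_sub: "x \<subseteq> {..<n} \<Longrightarrow> ex1 n x \<subseteq> {..<n+1}"
  unfolding ex1_def by auto

lemma ex1_card:
  assumes "x \<subseteq> {..<n}"
  shows "card (ex1 n x) = (if odd (card x) then card x + 1 else card x)"
proof -
  have "finite x" "n \<notin> x" using assms finite_subset by auto
  then show ?thesis unfolding ex1_def by simp
qed

lemma ex1_even: "x \<subseteq> {..<n} \<Longrightarrow> even (card (ex1 n x))"
  using ex1_card by auto

lemma ex1_sd:
  assumes "x \<subseteq> {..<n}" "y \<subseteq> {..<n}"
  shows "sd (ex1 n x) (ex1 n y) = ex1 n (sd x y)"
proof -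
  have f: "finite x" "finite y" "n \<notin> x" "n \<notin> y" using assms finite_subset by auto
  have p: "even (card (sd x y)) \<longleftrightarrow> (even (card x) \<longleftrightarrow> even (card y))" using even_card_sd f by blast
  show ?thesis unfolding ex1_def using f p by auto
qed

lemma ext_lin:
  assumes C: "binary_linear_code n C"
  shows "binary_linear_code (n+1) (extended_code n C)"
  unfolding binary_linear_code_def ext_img
proof (intro conjI ballI)
  show "ex1 n ` C \<subseteq> Pow {..<n + 1}"
  proof
    fix a assume "a \<in> ex1 n ` C"
    then obtain x where "x \<in> C" "a = ex1 n x" by blast
    then show "a \<in> Pow {..<n + 1}" using ex1_sub[of x n] blc_fin[OF C] by auto
  qed
  have "{} \<in> C" using C unfolding binary_linear_code_def by blast
  then show "{} \<in> ex1 n ` C" unfolding ex1_def by force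
  fix a b assume "a \<in> ex1 n ` C" "b \<in> ex1 n ` C"
  then obtain x y where xy: "x \<in> C" "y \<in> C" "a = ex1 n x" "b = ex1 n y" by blast
  have "x \<subseteq> {..<n}" "y \<subseteq> {..<n}" using xy(1,2) blc_fin[OF C] by auto
  then have "sd a b = ex1 n (sd x y)" using ex1_sd xy(3,4) by simp
  moreover have "sd x y \<in> C" using C xy blc_sd by blast
  ultimately show "sd a b \<in> ex1 n ` C" by blast
qed

lemma ext_card:
  assumes C: "binary_linear_code n C"
  shows "card (extended_code n C) = card C"
  unfolding ext_img
proof (rule card_image)
  show "inj_on (ex1 n) C"
  proof (rule inj_onI)
    fix x y assume "x \<in> C" "y \<in> C" "ex1 n x = ex1 n y"
    then show "x = y" using ex1_restr[of x n] ex1_restr[of y n] blc_fin[OF C] by metis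
  qed
qed

lemma ext_md:
  assumes C: "binary_linear_code n C" and md: "has_min_dist C 3"
  shows "has_min_dist (extended_code n C) 4"
  unfolding has_min_dist_def ext_img
proof (intro conjI ballI impI)
  obtain x where x: "x \<in> C" "x \<noteq> {}" "card x = 3" using md unfolding has_min_dist_def by blast
  have "card (ex1 n x) = 4" using ex1_card[of x n] x C blc_fin by auto
  moreover have "ex1 n x \<noteq> {}" using calculation by auto
  ultimately show "\<exists>a\<in>ex1 n ` C. a \<noteq> {} \<and> card a = 4" using x by blast
next
  fix a assume a: "a \<in> ex1 n ` C" "a \<noteq> {}"
  then obtain x where x: "x \<in> C" "a = ex1 n x" by blast
  have xs: "x \<subseteq> {..<n}" "finite x" using x C blc_fin by auto
  have "x \<noteq> {}" using a x unfolding ex1_def by auto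
  then have "3 \<le> card x" using md x unfolding has_min_dist_def by blast
  moreover have "even (card a)" using ex1_even xs x by blast
  moreover have "card x \<le> card a" using ex1_card[OF xs(1)] x by auto
  ultimately show "4 \<le> card a" by presburger
qed

lemma md_eq: "has_min_dist C d \<Longrightarrow> min_dist C = d"
  unfolding has_min_dist_def min_dist_def by (intro Least_equality) auto

lemma rows_in_dual: "is_pcm N C H \<Longrightarrow> h \<in> set H \<Longrightarrow> h \<in> dual_code N C"
  unfolding is_pcm_def using span_gen by blast

lemma even_rows_in_code:
  assumes C: "binary_linear_code N C" and H: "is_pcm N C H" and P: "P \<subseteq> {..<N}"
    and ev: "\<forall>h\<in>set H. even (card (h \<inter> P))"
  shows "P \<in> C"
proof -
  have fP: "finite P" using P finite_subset by blast
  let ?L = "{y. even (card (y \<inter> P))}"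
  have "gf2_span H \<subseteq> ?L"
  proof (rule span_min)
    show "{} \<in> ?L" by simp
    show "\<forall>x\<in>?L. \<forall>y\<in>?L. sd x y \<in> ?L" using even_sd_Int[OF fP] by auto
    show "set H \<subseteq> ?L" using ev by auto
  qed
  then have "dual_code N C \<subseteq> ?L" using H unfolding is_pcm_def by simp
  then have "P \<in> dual_code N (dual_code N C)" using P unfolding dual_code_def by auto
  then show ?thesis using double_dual[OF C] by simp
qed

lemma small_stop:
  assumes "finite S" "card S \<le> 2" "card (h \<inter> S) \<noteq> 1"
  shows "h \<inter> S = {} \<or> h \<inter> S = S"
proof -
  have le: "card (h \<inter> S) \<le> card S" using assms(1) by (intro card_mono) auto
  consider "card (h \<inter> S) = 0" | "card (h \<inter> S) = 2" using le assms by linarith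
  then show ?thesis
  proof cases
    case 1 then show ?thesis using assms(1) by auto
  next
    case 2 then have "card (h \<inter> S) = card S" using le assms by linarith
    then show ?thesis using assms(1) by (metis Int_lower2 card_subset_eq)
  qed
qed

lemma stop_witness:
  assumes H: "is_pcm N C H" and x: "x \<in> C"
  shows "stopping_set H x"
  unfolding stopping_set_def
proof
  fix h assume "h \<in> set H"
  then have "h \<in> dual_code N C" using rows_in_dual H by blast
  then have "even (card (x \<inter> h))" using x unfolding dual_code_def by blast
  then show "card (h \<inter> x) \<noteq> 1" by (metis Int_commute odd_one)
qed

lemma pcm_sd3:
  assumes C: "binary_linear_code n C" and md: "has_min_dist C 3" and H: "is_pcm n C H"
  shows "stopping_distance n H = 3"
  unfolding stopping_distance_def
proof (rule Least_equality)
  obtain x where x: "x \<in> C" "x \<noteq> {}" "card x = 3" using md unfolding has_min_dist_def by blast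
  show "\<exists>S\<subseteq>{..<n}. S \<noteq> {} \<and> stopping_set H S \<and> card S = 3"
    using x stop_witness[OF H x(1)] blc_fin[OF C x(1)] by blast
next
  fix s assume "\<exists>S\<subseteq>{..<n}. S \<noteq> {} \<and> stopping_set H S \<and> card S = s"
  then obtain S where S: "S \<subseteq> {..<n}" "S \<noteq> {}" "stopping_set H S" "card S = s" by blast
  have fS: "finite S" using S finite_subset by blast
  show "3 \<le> s"
  proof (rule ccontr)
    assume "\<not> 3 \<le> s"
    then have le: "card S \<le> 2" using S by simp
    have "\<forall>h\<in>set H. even (card (h \<inter> S))"
    proof
      fix h assume "h \<in> set H"
      then have "card (h \<inter> S) \<noteq> 1" using S(3) unfolding stopping_set_def by blast
      moreover have "h \<inter> S = {} \<or> h \<inter> S = S" using small_stop fS le calculation by blast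
      moreover have "card S > 0" using fS S(2) by auto
      ultimately show "even (card (h \<inter> S))" using le
      proof -
        assume a: "card (h \<inter> S) \<noteq> 1" "h \<inter> S = {} \<or> h \<inter> S = S" "card S > 0" "card S \<le> 2"
        show ?thesis
        proof (cases "h \<inter> S = {}")
          case True then show ?thesis by simp
        next
          case False then have "h \<inter> S = S" using a by blast
          then have "card S \<noteq> 1" using a(1) by simp
          then have "card S = 2" using a(3,4) by linarith
          then show ?thesis using \<open>h \<inter> S = S\<close> by simp
        qed
      qed
    qed
    then have "S \<in> C" using even_rows_in_code[OF C H S(1)] by blast
    then have "3 \<le> card S" using md S(2) unfolding has_min_dist_def by blast
    then show False using le by simp
  qed
qed

lemma pcm_exists:
  assumes C: "binary_linear_code n C"
  shows "\<exists>H. is_pcm n C H"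
proof -
  have fin: "finite (dual_code n C)" unfolding dual_code_def by (rule finite_subset[of _ "Pow {..<n}"]) auto
  obtain H where sH: "set H = dual_code n C" using finite_list[OF fin] by blast
  have "gf2_span H \<subseteq> dual_code n C"
    using span_min[of "dual_code n C" H] dual_lin[of n C] sH unfolding binary_linear_code_def by blast
  moreover have "dual_code n C \<subseteq> gf2_span H" using sH span_gen by blast
  ultimately show ?thesis unfolding is_pcm_def using sH unfolding dual_code_def by auto
qed

lemma rho_eq_r:
  assumes C: "binary_linear_code n C" and md: "has_min_dist C 3"
  shows "stopping_redundancy n C = redundancy n C"
proof -
  have "min_dist C = 3" using md_eq[OF md] .
  then have "\<And>H. is_pcm n C H \<Longrightarrow> stopping_distance n H = min_dist C" using pcm_sd3[OF C md] by simp
  then have "(\<lambda>m. \<exists>H. is_pcm n C H \<and> stopping_distance n H = min_dist C \<and> length H = m)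
     = (\<lambda>m. \<exists>H. is_pcm n C H \<and> length H = m)" by blast
  then show ?thesis unfolding stopping_redundancy_def redundancy_def by simp
qed

lemma dual_ext_small:
  assumes C: "binary_linear_code n C" and y: "y \<subseteq> {..<n}"
  shows "y \<in> dual_code (n+1) (extended_code n C) \<longleftrightarrow> y \<in> dual_code n C"
proof -
  have "\<forall>x\<in>C. ex1 n x \<inter> y = x \<inter> y" using ex1_Int blc_fin[OF C] y by blast
  then show ?thesis using y unfolding dual_code_def ext_img by auto
qed

lemma u_dual:
  assumes C: "binary_linear_code n C"
  shows "{..<n+1} \<in> dual_code (n+1) (extended_code n C)"
proof -
  have "\<forall>x\<in>C. ex1 n x \<inter> {..<n+1} = ex1 n x" using ex1_sub blc_fin[OF C] by blast
  then have "\<forall>x\<in>C. even (card (ex1 n x \<inter> {..<n+1}))" using ex1_even blc_fin[OF C] by simp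
  then show ?thesis unfolding dual_code_def ext_img by auto
qed

lemma ext_pcm:
  assumes C: "binary_linear_code n C" and H: "is_pcm n C H"
    and r: "\<forall>h\<in>set H2. h \<subseteq> {..<n+1}" and g: "set H2 \<subseteq> dual_code (n+1) (extended_code n C)"
    and u: "{..<n+1} \<in> gf2_span H2" and HH: "set H \<subseteq> gf2_span H2"
  shows "is_pcm (n+1) (extended_code n C) H2"
  unfolding is_pcm_def
proof (intro conjI)
  show "\<forall>h\<in>set H2. h \<subseteq> {..<n + 1}" using r .
  let ?D' = "dual_code (n+1) (extended_code n C)"
  have lin: "binary_linear_code (n+1) ?D'" by (rule dual_lin)
  have s1: "gf2_span H2 \<subseteq> ?D'"
    using span_min[OF _ _ g] lin unfolding binary_linear_code_def by blast
  have s2: "gf2_span H \<subseteq> gf2_span H2" using span_mono[OF HH] .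
  have "?D' \<subseteq> gf2_span H2"
  proof
    fix y assume y: "y \<in> ?D'"
    have uD: "{..<n+1} \<in> ?D'" using u_dual[OF C] .
    define y0 where "y0 = (if n \<in> y then sd y {..<n+1} else y)"
    have y0D: "y0 \<in> ?D'" unfolding y0_def using y uD blc_sd[OF lin] by auto
    have "y \<subseteq> {..<n+1}" using y unfolding dual_code_def by blast
    then have "y0 \<subseteq> {..<n}" unfolding y0_def by (auto simp: subset_iff less_Suc_eq)
    then have "y0 \<in> dual_code n C" using dual_ext_small[OF C] y0D by blast
    then have y0s: "y0 \<in> gf2_span H2" using s2 H unfolding is_pcm_def by blast
    have "y = (if n \<in> y then sd y0 {..<n+1} else y0)"
      unfolding y0_def using \<open>y \<subseteq> {..<n+1}\<close> by auto
    then show "y \<in> gf2_span H2" using y0s u span_closed by (metis (no_types, lifting))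
  qed
  then show "gf2_span H2 = ?D'" using s1 by blast
qed

lemma dual_nontriv:
  assumes C: "binary_linear_code n C" and md: "has_min_dist C 3"
  shows "dual_code n C \<noteq> {{}}"
proof
  assume a: "dual_code n C = {{}}"
  have "C = dual_code n {{}}" using double_dual[OF C] a by simp
  also have "\<dots> = Pow {..<n}" unfolding dual_code_def by auto
  finally have CP: "C = Pow {..<n}" .
  obtain x where x: "x \<in> C" "x \<noteq> {}" "card x = 3" using md unfolding has_min_dist_def by blast
  then obtain j where "j \<in> x" by blast
  then have "{j} \<in> C" using x CP by auto
  then have "3 \<le> card {j}" using md unfolding has_min_dist_def by blast
  then show False by simp
qed

lemma pcm_nonempty:
  assumes C: "binary_linear_code n C" and md: "has_min_dist C 3" and H: "is_pcm n C H"
  shows "H \<noteq> []"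
  using dual_nontriv[OF C md] H span_Nil unfolding is_pcm_def by auto

lemma partD:
  assumes C: "binary_linear_code n C" and md: "has_min_dist C 3" and H: "is_pcm n C H"
  shows "stopping_redundancy (n+1) (extended_code n C) \<le> 2 * length H"
proof -
  let ?C' = "extended_code n C"
  let ?D' = "dual_code (n+1) ?C'"
  let ?u = "{..<n+1}"
  define H' where "H' = H @ map (\<lambda>h. ?u - h) H"
  have lin': "binary_linear_code (n+1) ?C'" using ext_lin[OF C] .
  have md': "has_min_dist ?C' 4" using ext_md[OF C md] .
  have linD: "binary_linear_code (n+1) ?D'" by (rule dual_lin)
  have Hs: "\<forall>h\<in>set H. h \<subseteq> {..<n}" using H unfolding is_pcm_def by blast
  have Hu: "h \<subseteq> ?u" if "h \<in> set H" for h
  proof -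
    have "h \<subseteq> {..<n}" using Hs that by blast
    then show ?thesis by auto
  qed
  have HD: "h \<in> ?D'" if "h \<in> set H" for h
    using that Hs dual_ext_small[OF C] rows_in_dual[OF H] by blast
  have uD: "?u \<in> ?D'" using u_dual[OF C] .
  have cD: "?u - h \<in> ?D'" if "h \<in> set H" for h
  proof -
    have "?u - h = sd ?u h" using Hu[OF that] by auto
    then show ?thesis using blc_sd[OF linD uD HD[OF that]] by simp
  qed
  have setH': "set H' = set H \<union> (\<lambda>h. ?u - h) ` set H" unfolding H'_def by simp
  obtain h0 where h0: "h0 \<in> set H" using pcm_nonempty[OF C md H] by (cases H) auto
  have pcm': "is_pcm (n+1) ?C' H'"
  proof (rule ext_pcm[OF C H])
    show "\<forall>h\<in>set H'. h \<subseteq> {..<n + 1}" using Hu unfolding setH' by auto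
    show "set H' \<subseteq> ?D'" using HD cD unfolding setH' by auto
    have "h0 \<in> set H'" "?u - h0 \<in> set H'" using h0 setH' by auto
    then have "h0 \<in> gf2_span H'" "?u - h0 \<in> gf2_span H'" using span_gen by auto
    moreover have "sd h0 (?u - h0) = ?u" using Hu[OF h0] by auto
    ultimately show "?u \<in> gf2_span H'" using span_closed by metis
    show "set H \<subseteq> gf2_span H'" using span_gen setH' by blast
  qed
  have sd4: "stopping_distance (n+1) H' = 4"
    unfolding stopping_distance_def
  proof (rule Least_equality)
    obtain x where x: "x \<in> ?C'" "x \<noteq> {}" "card x = 4" using md' unfolding has_min_dist_def by blast
    show "\<exists>S\<subseteq>{..<n+1}. S \<noteq> {} \<and> stopping_set H' S \<and> card S = 4"
      using x stop_witness[OF pcm' x(1)] blc_fin[OF lin' x(1)] by blast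
  next
    fix s assume "\<exists>S\<subseteq>{..<n+1}. S \<noteq> {} \<and> stopping_set H' S \<and> card S = s"
    then obtain S where S: "S \<subseteq> {..<n+1}" "S \<noteq> {}" "stopping_set H' S" "card S = s" by blast
    have fS: "finite S" using S finite_subset by blast
    show "4 \<le> s"
    proof (rule ccontr)
      assume "\<not> 4 \<le> s"
      then have le: "card S \<le> 3" using S by simp
      have r1: "card (h \<inter> S) \<noteq> 1" and r2: "card (S - h) \<noteq> 1" if "h \<in> set H" for h
      proof -
        show "card (h \<inter> S) \<noteq> 1" using S(3) that unfolding stopping_set_def setH' by blast
        have "card ((?u - h) \<inter> S) \<noteq> 1" using S(3) that unfolding stopping_set_def setH' by blast
        moreover have "(?u - h) \<inter> S = S - h" using S(1) by auto
        ultimately show "card (S - h) \<noteq> 1" by simp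
      qed
      have cd: "card (S - h) + card (h \<inter> S) = card S" for h
        using fS by (metis Diff_Diff_Int Diff_subset Int_commute card_Diff_subset card_mono le_add_diff_inverse2 finite_Int Int_lower2 add.commute card_Diff_subset_Int)
      obtain P where P: "P \<subseteq> S" "card P = 2" "\<forall>h\<in>set H. h \<inter> P = {} \<or> P \<subseteq> h"
      proof -
        have "card S \<noteq> 1"
        proof
          assume "card S = 1"
          then have "card (h0 \<inter> S) = 0 \<or> card (h0 \<inter> S) = 1"
            using card_mono[OF fS, of "h0 \<inter> S"] by auto
          then show False using r1[OF h0] r2[OF h0] cd[of h0] \<open>card S = 1\<close> by auto
        qed
        moreover have "card S \<noteq> 0" using fS S(2) by simp
        ultimately consider "card S = 2" | "card S = 3" using le by linarith
        then show ?thesis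
        proof cases
          case 1
          have "\<forall>h\<in>set H. h \<inter> S = {} \<or> S \<subseteq> h"
            using small_stop[OF fS] 1 r1 by fastforce
          then show ?thesis using that[of S] 1 by blast
        next
          case 3: 2
          obtain a b c where abc: "S = {a, b, c}" "a \<noteq> b" "a \<noteq> c" "b \<noteq> c"
            using 3 by (metis card_3_iff)
          have hS: "h \<inter> S = {} \<or> S \<subseteq> h" if hH: "h \<in> set H" for h
          proof -
            have "card (h \<inter> S) \<le> 3" using card_mono[OF fS, of "h \<inter> S"] 3 by auto
            moreover have "card (h \<inter> S) \<noteq> 2" using r2[OF hH] cd[of h] 3 by auto
            ultimately consider "card (h \<inter> S) = 0" | "card (h \<inter> S) = 3" using r1[OF hH] by linarith
            then show ?thesis
            proof cases
              case 1 then show ?thesis using fS by auto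
            next
              case 2 then have "h \<inter> S = S" using 3 fS by (metis Int_lower2 card_subset_eq)
              then show ?thesis by blast
            qed
          qed
          show ?thesis
          proof (rule that[of "{a, b}"])
            show "{a, b} \<subseteq> S" "card {a, b} = 2" using abc by auto
            show "\<forall>h\<in>set H. h \<inter> {a, b} = {} \<or> {a, b} \<subseteq> h"
              using hS abc by blast
          qed
        qed
      qed
      have fP: "finite P" using P fS finite_subset by blast
      have "\<forall>h\<in>set H'. even (card (h \<inter> P))"
      proof
        fix g assume "g \<in> set H'"
        then consider h where "h \<in> set H" "g = h" | h where "h \<in> set H" "g = ?u - h"
          unfolding setH' by blast
        then show "even (card (g \<inter> P))"
        proof cases
          case (1 h) then show ?thesis using P by (metis Int_absorb1 Int_commute card.empty even_zero even_numeral)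
        next
          case (2 h)
          have "g \<inter> P = P - h" using 2 P S(1) by auto
          moreover have "P - h = {} \<or> P - h = P" using P 2 by blast
          ultimately show ?thesis using P by (metis Diff_eq_empty_iff card.empty even_zero even_numeral)
        qed
      qed
      then have "P \<in> ?C'" using even_rows_in_code[OF lin' pcm'] P S(1) by blast
      moreover have "P \<noteq> {}" using P by auto
      ultimately have "4 \<le> card P" using md' unfolding has_min_dist_def by blast
      then show False using P by simp
    qed
  qed
  have "min_dist ?C' = 4" using md_eq[OF md'] .
  then have "stopping_redundancy (n+1) ?C' \<le> length H'"
    unfolding stopping_redundancy_def using pcm' sd4 by (intro Least_le) auto
  then show ?thesis unfolding H'_def by simp
qed

lemma red_le:
  assumes "is_pcm N C H" shows "redundancy N C \<le> length H"
  unfolding redundancy_def using assms by (intro Least_le) auto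

lemma red_ex:
  assumes "binary_linear_code N C"
  shows "\<exists>H. is_pcm N C H \<and> length H = redundancy N C"
proof -
  obtain H0 where "is_pcm N C H0" using pcm_exists[OF assms] by blast
  then have "\<exists>m. \<exists>H. is_pcm N C H \<and> length H = m" by blast
  from LeastI_ex[OF this] show ?thesis unfolding redundancy_def .
qed

lemma partE1:
  assumes C: "binary_linear_code n C"
  shows "redundancy (n+1) (extended_code n C) \<le> redundancy n C + 1"
proof -
  obtain H where H: "is_pcm n C H" "length H = redundancy n C" using red_ex[OF C] by blast
  let ?u = "{..<n+1}"
  have Hs: "\<forall>h\<in>set H. h \<subseteq> {..<n}" using H unfolding is_pcm_def by blast
  have "is_pcm (n+1) (extended_code n C) (H @ [?u])"
  proof (rule ext_pcm[OF C H(1)])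
    show "\<forall>h\<in>set (H @ [?u]). h \<subseteq> {..<n + 1}"
    proof
      fix h assume "h \<in> set (H @ [?u])"
      then have "h \<in> set H \<or> h = ?u" by auto
      then show "h \<subseteq> {..<n + 1}"
      proof
        assume "h \<in> set H" then have "h \<subseteq> {..<n}" using Hs by blast
        then show ?thesis by auto
      qed simp
    qed
    have "h \<in> dual_code (n+1) (extended_code n C)" if "h \<in> set H" for h
    proof -
      have "h \<subseteq> {..<n}" using that Hs by blast
      then show ?thesis using dual_ext_small[OF C] rows_in_dual[OF H(1) that] by simp
    qed
    then show "set (H @ [?u]) \<subseteq> dual_code (n+1) (extended_code n C)" using u_dual[OF C] by auto
    show "?u \<in> gf2_span (H @ [?u])" by (rule span_gen) simp
    show "set H \<subseteq> gf2_span (H @ [?u])" using span_gen by fastforce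
  qed
  from red_le[OF this] show ?thesis using H(2) by simp
qed

lemma partE2:
  assumes C: "binary_linear_code n C"
  shows "redundancy n C + 1 \<le> redundancy (n+1) (extended_code n C)"
proof -
  let ?C' = "extended_code n C"
  let ?D' = "dual_code (n+1) ?C'"
  let ?u = "{..<n+1}"
  have lin': "binary_linear_code (n+1) ?C'" using ext_lin[OF C] .
  obtain H' where H': "is_pcm (n+1) ?C' H'" "length H' = redundancy (n+1) ?C'" using red_ex[OF lin'] by blast
  have spD: "gf2_span H' = ?D'" using H' unfolding is_pcm_def by blast
  have "\<exists>h0\<in>set H'. n \<in> h0"
  proof (rule ccontr)
    assume "\<not> ?thesis"
    then have "gf2_span H' \<subseteq> {y. n \<notin> y}" by (intro span_min) auto
    then show False using u_dual[OF C] spD by auto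
  qed
  then obtain h0 where h0: "h0 \<in> set H'" "n \<in> h0" by blast
  then obtain xs ys where sp: "H' = xs @ h0 # ys" by (meson split_list)
  define f where "f h = (if n \<in> h then sd h h0 else h)" for h
  define H where "H = map f (xs @ ys)"
  have H's: "\<forall>h\<in>set H'. h \<subseteq> ?u" using H' unfolding is_pcm_def by blast
  have rowsH: "set H \<subseteq> gf2_span H'"
  proof
    fix g assume "g \<in> set H"
    then obtain h where h: "h \<in> set H'" "g = f h" unfolding H_def sp by auto
    have a: "h \<in> gf2_span H'" "h0 \<in> gf2_span H'" using span_gen h(1) h0(1) by auto
    show "g \<in> gf2_span H'"
    proof (cases "n \<in> h")
      case True then show ?thesis using h(2) span_closed[OF a] unfolding f_def by simp
    next
      case False then show ?thesis using h(2) a unfolding f_def by simp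
    qed
  qed
  have Hs: "\<forall>g\<in>set H. g \<subseteq> {..<n}"
  proof
    fix g assume "g \<in> set H"
    then obtain h where h: "h \<in> set H'" "g = f h" unfolding H_def sp by auto
    have "h \<subseteq> ?u" "h0 \<subseteq> ?u" using H's h h0 by auto
    then show "g \<subseteq> {..<n}" unfolding h f_def using h0(2) by (auto simp: subset_iff less_Suc_eq)
  qed
  have pcm: "is_pcm n C H"
    unfolding is_pcm_def
  proof (intro conjI)
    show "\<forall>h\<in>set H. h \<subseteq> {..<n}" using Hs .
    have "set H \<subseteq> dual_code n C"
    proof
      fix g assume g: "g \<in> set H"
      then have "g \<in> ?D'" using rowsH spD by blast
      moreover have "g \<subseteq> {..<n}" using Hs g by blast
      ultimately show "g \<in> dual_code n C" using dual_ext_small[OF C] by simp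
    qed
    then have s1: "gf2_span H \<subseteq> dual_code n C"
      using span_min[of "dual_code n C" H] dual_lin[of n C] unfolding binary_linear_code_def by blast
    have "dual_code n C \<subseteq> gf2_span H"
    proof
      fix y assume y: "y \<in> dual_code n C"
      have ys: "y \<subseteq> {..<n}" using y unfolding dual_code_def by blast
      then have "y \<in> ?D'" using dual_ext_small[OF C ys] y by simp
      then have yH': "y \<in> gf2_span H'" using spD by simp
      let ?L = "{z. z \<in> gf2_span H \<or> sd z h0 \<in> gf2_span H}"
      have "gf2_span H' \<subseteq> ?L"
      proof (rule span_min)
        show "{} \<in> ?L" using span_empty by auto
        show "\<forall>a\<in>?L. \<forall>b\<in>?L. sd a b \<in> ?L"
        proof (intro ballI)
          fix a b assume a: "a \<in> ?L" and b: "b \<in> ?L"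
          have e1: "sd (sd a h0) b = sd (sd a b) h0" by auto
          have e2: "sd a (sd b h0) = sd (sd a b) h0" by auto
          have e3: "sd (sd a h0) (sd b h0) = sd a b" by auto
          consider "a \<in> gf2_span H" "b \<in> gf2_span H" | "sd a h0 \<in> gf2_span H" "b \<in> gf2_span H"
            | "a \<in> gf2_span H" "sd b h0 \<in> gf2_span H" | "sd a h0 \<in> gf2_span H" "sd b h0 \<in> gf2_span H"
            using a b by blast
          then show "sd a b \<in> ?L"
          proof cases
            case 1 then show ?thesis using span_closed[of a H b] by simp
          next
            case 2 then show ?thesis using span_closed[of "sd a h0" H b] e1 by simp
          next
            case 3 then show ?thesis using span_closed[of a H "sd b h0"] e2 by simp
          next
            case 4 then show ?thesis using span_closed[of "sd a h0" H "sd b h0"] e3 by simp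
          qed
        qed
        show "set H' \<subseteq> ?L"
        proof
          fix h assume h: "h \<in> set H'"
          show "h \<in> ?L"
          proof (cases "h = h0")
            case True then show ?thesis using span_empty by auto
          next
            case False
            then have "h \<in> set (xs @ ys)" using h sp by auto
            then have "f h \<in> set H" unfolding H_def by auto
            then have "f h \<in> gf2_span H" using span_gen by blast
            then show ?thesis
            proof (cases "n \<in> h")
              case True then show ?thesis using \<open>f h \<in> gf2_span H\<close> unfolding f_def by simp
            next
              case False then show ?thesis using \<open>f h \<in> gf2_span H\<close> unfolding f_def by simp
            qed
          qed
        qed
      qed
      then have "y \<in> gf2_span H \<or> sd y h0 \<in> gf2_span H" using yH' by blast
      moreover have "gf2_span H \<subseteq> {z. n \<notin> z}" using Hs by (intro span_min) auto
      moreover have "n \<in> sd y h0" using ys h0 by auto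
      ultimately show "y \<in> gf2_span H" by blast
    qed
    then show "gf2_span H = dual_code n C" using s1 by blast
  qed
  have "length H + 1 = length H'" unfolding H_def sp by simp
  then show ?thesis using red_le[OF pcm] H'(2) by linarith
qed

theorem theorem9:
  fixes n k :: nat and C :: "nat set set"
  assumes "binary_linear_code n C" and "code_dim C k" and "has_min_dist C 3"
  shows "binary_linear_code (n + 1) (extended_code n C)
       \<and> code_dim (extended_code n C) k
       \<and> has_min_dist (extended_code n C) 4
       \<and> stopping_redundancy (n + 1) (extended_code n C) \<le> 2 * stopping_redundancy n C
       \<and> 2 * stopping_redundancy n C = 2 * redundancy (n + 1) (extended_code n C) - 2"
proof (intro conjI)
  note C = assms(1) and md = assms(3)
  show "binary_linear_code (n + 1) (extended_code n C)" using ext_lin[OF C] .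
  show "code_dim (extended_code n C) k" using assms(2) ext_card[OF C] unfolding code_dim_def by simp
  show "has_min_dist (extended_code n C) 4" using ext_md[OF C md] .
  have rho: "stopping_redundancy n C = redundancy n C" using rho_eq_r[OF C md] .
  obtain H where H: "is_pcm n C H" "length H = redundancy n C" using red_ex[OF C] by blast
  show "stopping_redundancy (n + 1) (extended_code n C) \<le> 2 * stopping_redundancy n C"
    using partD[OF C md H(1)] H(2) rho by simp
  show "2 * stopping_redundancy n C = 2 * redundancy (n + 1) (extended_code n C) - 2"
    using partE1[OF C] partE2[OF C] rho by simp
qed

end
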